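(* Let $\mathcal{C},\mathcal{D}$ be direct categories, $F:\mathcal{C}\to\mathcal{D}$ a functor, and $\mathcal{Q}\subseteq\mathcal{D}$ an interval. Then $F^{-1}(\mathcal{Q})$ is a subcategory of $\mathcal{C}$ each of whose connected components is an interval in $\mathcal{C}$, and $F^*(I_{\mathcal{Q}})=I_{\mathcal{Q}}\circ F$ is isomorphic to the direct sum of the interval modules $I_{\mathcal{P}}$ over the connected components $\mathcal{P}$ of $F^{-1}(\mathcal{Q})$.
   Context: A small category is direct if it has no infinite chain of composable non-identity morphisms and no cycle of non-identity morphisms of positive length. An interval in a direct category $\mathcal{C}$ is a nonempty connected subcategory $\mathcal{Q}$ that is convex: whenever $x,y\in\mathcal{Q}$, $\alpha:x\to z$, $\beta:z\to y$ are morphisms of $\mathcal{C}$ and $\beta\circ\alpha$ is a morphism of $\mathcal{Q}$, then $z$, $\alpha$, $\beta$ belong to $\mathcal{Q}$. The interval module $I_{\mathcal{Q}}$ (over a field $k$) takes value $k$ at objects of $\mathcal{Q}$ and $0$ elsewhere, sends morphisms of $\mathcal{Q}$ to the identity and all other morphisms to $0$. $F^{-1}(\mathcal{Q})$ is the subcategory of $\mathcal{C}$ whose objects are those $x$ with $F(x)\in\mathcal{Q}$ and whose morphisms are those $\varphi$ between such objects with $F(\varphi)$ a morphism of $\mathcal{Q}$. *)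

theory Defs
  imports Main
begin

text \<open>A small category: a set of objects, a set of morphisms, domain, codomain,
  identities and composition (Comp g f = g o f, defined when Cod f = Dom g).\<close>
record ('o, 'm) category =
  Obj  :: "'o set"
  Mor  :: "'m set"
  Dom  :: "'m \<Rightarrow> 'o"
  Cod  :: "'m \<Rightarrow> 'o"
  Id   :: "'o \<Rightarrow> 'm"
  Comp :: "'m \<Rightarrow> 'm \<Rightarrow> 'm"

definition is_category :: "('o, 'm) category \<Rightarrow> bool" where
  "is_category C \<longleftrightarrow>
     (\<forall>f\<in>Mor C. Dom C f \<in> Obj C \<and> Cod C f \<in> Obj C) \<and>
     (\<forall>x\<in>Obj C. Id C x \<in> Mor C \<and> Dom C (Id C x) = x \<and> Cod C (Id C x) = x) \<and>
     (\<forall>f\<in>Mor C. \<forall>g\<in>Mor C. Cod C f = Dom C g \<longrightarrow>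
        Comp C g f \<in> Mor C \<and> Dom C (Comp C g f) = Dom C f \<and> Cod C (Comp C g f) = Cod C g) \<and>
     (\<forall>f\<in>Mor C. Comp C (Id C (Cod C f)) f = f \<and> Comp C f (Id C (Dom C f)) = f) \<and>
     (\<forall>f\<in>Mor C. \<forall>g\<in>Mor C. \<forall>h\<in>Mor C. Cod C f = Dom C g \<longrightarrow> Cod C g = Dom C h \<longrightarrow>
        Comp C h (Comp C g f) = Comp C (Comp C h g) f)"

definition non_identity :: "('o, 'm) category \<Rightarrow> 'm \<Rightarrow> bool" where
  "non_identity C f \<longleftrightarrow> f \<in> Mor C \<and> f \<noteq> Id C (Dom C f)"

definition direct :: "('o, 'm) category \<Rightarrow> bool" where
  "direct C \<longleftrightarrow> is_category C \<and>
     \<not> (\<exists>c :: nat \<Rightarrow> 'm. \<forall>i. non_identity C (c i) \<and> Cod C (c (Suc i)) = Dom C (c i)) \<and>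
     \<not> (\<exists>n::nat. \<exists>c :: nat \<Rightarrow> 'm. n \<ge> 1 \<and>
           (\<forall>i<n. non_identity C (c i)) \<and>
           (\<forall>i. Suc i < n \<longrightarrow> Cod C (c i) = Dom C (c (Suc i))) \<and>
           Cod C (c (n - 1)) = Dom C (c 0))"

definition is_subcat :: "('o, 'm) category \<Rightarrow> 'o set \<times> 'm set \<Rightarrow> bool" where
  "is_subcat C S \<longleftrightarrow>
     fst S \<subseteq> Obj C \<and> snd S \<subseteq> Mor C \<and>
     (\<forall>f\<in>snd S. Dom C f \<in> fst S \<and> Cod C f \<in> fst S) \<and>
     (\<forall>x\<in>fst S. Id C x \<in> snd S) \<and>
     (\<forall>f\<in>snd S. \<forall>g\<in>snd S. Cod C f = Dom C g \<longrightarrow> Comp C g f \<in> snd S)"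

definition zigzag :: "('o, 'm) category \<Rightarrow> 'm set \<Rightarrow> ('o \<times> 'o) set" where
  "zigzag C M = (({(Dom C f, Cod C f) | f. f \<in> M}) \<union> ({(Dom C f, Cod C f) | f. f \<in> M})\<inverse>)\<^sup>*"

definition connected_subcat :: "('o, 'm) category \<Rightarrow> 'o set \<times> 'm set \<Rightarrow> bool" where
  "connected_subcat C S \<longleftrightarrow> fst S \<noteq> {} \<and>
     (\<forall>x\<in>fst S. \<forall>y\<in>fst S. (x, y) \<in> zigzag C (snd S))"

definition convex :: "('o, 'm) category \<Rightarrow> 'o set \<times> 'm set \<Rightarrow> bool" where
  "convex C S \<longleftrightarrow>
     (\<forall>\<alpha>\<in>Mor C. \<forall>\<beta>\<in>Mor C.
        Dom C \<alpha> \<in> fst S \<longrightarrow> Cod C \<beta> \<in> fst S \<longrightarrow> Cod C \<alpha> = Dom C \<beta> \<longrightarrow>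
        Comp C \<beta> \<alpha> \<in> snd S \<longrightarrow>
        Cod C \<alpha> \<in> fst S \<and> \<alpha> \<in> snd S \<and> \<beta> \<in> snd S)"

definition is_interval :: "('o, 'm) category \<Rightarrow> 'o set \<times> 'm set \<Rightarrow> bool" where
  "is_interval C S \<longleftrightarrow> is_subcat C S \<and> connected_subcat C S \<and> convex C S"

definition component_of :: "('o, 'm) category \<Rightarrow> 'o set \<times> 'm set \<Rightarrow> 'o \<Rightarrow> 'o set \<times> 'm set" where
  "component_of C S x =
     ({y \<in> fst S. (x, y) \<in> zigzag C (snd S)},
      {f \<in> snd S. Dom C f \<in> {y \<in> fst S. (x, y) \<in> zigzag C (snd S)}})"

definition components :: "('o, 'm) category \<Rightarrow> 'o set \<times> 'm set \<Rightarrow> ('o set \<times> 'm set) set" where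
  "components C S = component_of C S ` fst S"

definition is_functor :: "('o, 'm) category \<Rightarrow> ('p, 'n) category \<Rightarrow> ('o \<Rightarrow> 'p) \<Rightarrow> ('m \<Rightarrow> 'n) \<Rightarrow> bool" where
  "is_functor C D Fo Fm \<longleftrightarrow> is_category C \<and> is_category D \<and>
     (\<forall>x\<in>Obj C. Fo x \<in> Obj D) \<and>
     (\<forall>f\<in>Mor C. Fm f \<in> Mor D \<and> Dom D (Fm f) = Fo (Dom C f) \<and> Cod D (Fm f) = Fo (Cod C f)) \<and>
     (\<forall>x\<in>Obj C. Fm (Id C x) = Id D (Fo x)) \<and>
     (\<forall>f\<in>Mor C. \<forall>g\<in>Mor C. Cod C f = Dom C g \<longrightarrow> Fm (Comp C g f) = Comp D (Fm g) (Fm f))"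

definition preimage_subcat ::
  "('o, 'm) category \<Rightarrow> ('o \<Rightarrow> 'p) \<Rightarrow> ('m \<Rightarrow> 'n) \<Rightarrow> 'p set \<times> 'n set \<Rightarrow> 'o set \<times> 'm set" where
  "preimage_subcat C Fo Fm Q =
     ({x \<in> Obj C. Fo x \<in> fst Q},
      {f \<in> Mor C. Fo (Dom C f) \<in> fst Q \<and> Fo (Cod C f) \<in> fst Q \<and> Fm f \<in> snd Q})"

text \<open>A C-module over the field 'k: to each object x a linear subspace V x of the
  vector space 'i => 'k (pointwise operations), to each morphism f a map A f.\<close>
type_synonym ('o, 'm, 'i, 'k) cmodule = "('o \<Rightarrow> ('i \<Rightarrow> 'k) set) \<times> ('m \<Rightarrow> ('i \<Rightarrow> 'k) \<Rightarrow> ('i \<Rightarrow> 'k))"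

definition lin_subspace :: "('i \<Rightarrow> 'k::field) set \<Rightarrow> bool" where
  "lin_subspace V \<longleftrightarrow> (\<lambda>_. 0) \<in> V \<and>
     (\<forall>u\<in>V. \<forall>v\<in>V. (\<lambda>i. u i + v i) \<in> V) \<and> (\<forall>c. \<forall>u\<in>V. (\<lambda>i. c * u i) \<in> V)"

definition lin_on :: "('i \<Rightarrow> 'k::field) set \<Rightarrow> (('i \<Rightarrow> 'k) \<Rightarrow> ('j \<Rightarrow> 'k)) \<Rightarrow> bool" where
  "lin_on V h \<longleftrightarrow>
     (\<forall>u\<in>V. \<forall>v\<in>V. h (\<lambda>i. u i + v i) = (\<lambda>j. h u j + h v j)) \<and>
     (\<forall>c. \<forall>u\<in>V. h (\<lambda>i. c * u i) = (\<lambda>j. c * h u j))"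

definition is_cmodule :: "('o, 'm) category \<Rightarrow> ('o, 'm, 'i, 'k::field) cmodule \<Rightarrow> bool" where
  "is_cmodule C M \<longleftrightarrow>
     (\<forall>x\<in>Obj C. lin_subspace (fst M x)) \<and>
     (\<forall>f\<in>Mor C. (\<forall>v\<in>fst M (Dom C f). snd M f v \<in> fst M (Cod C f)) \<and> lin_on (fst M (Dom C f)) (snd M f)) \<and>
     (\<forall>x\<in>Obj C. \<forall>v\<in>fst M x. snd M (Id C x) v = v) \<and>
     (\<forall>f\<in>Mor C. \<forall>g\<in>Mor C. Cod C f = Dom C g \<longrightarrow>
        (\<forall>v\<in>fst M (Dom C f). snd M (Comp C g f) v = snd M g (snd M f v)))"

definition cmod_iso :: "('o, 'm) category \<Rightarrow> ('o, 'm, 'i, 'k::field) cmodule \<Rightarrow> ('o, 'm, 'j, 'k) cmodule \<Rightarrow> bool" where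
  "cmod_iso C M N \<longleftrightarrow> (\<exists>\<phi> :: 'o \<Rightarrow> ('i \<Rightarrow> 'k) \<Rightarrow> ('j \<Rightarrow> 'k).
     (\<forall>x\<in>Obj C. bij_betw (\<phi> x) (fst M x) (fst N x) \<and> lin_on (fst M x) (\<phi> x)) \<and>
     (\<forall>f\<in>Mor C. \<forall>v\<in>fst M (Dom C f). \<phi> (Cod C f) (snd M f v) = snd N f (\<phi> (Dom C f) v)))"

text \<open>Interval module I_S: k (= unit => k) on objects of S, 0 elsewhere; identity on
  morphisms of S, zero on all other morphisms.\<close>
definition interval_module :: "'o set \<times> 'm set \<Rightarrow> ('o, 'm, unit, 'k::field) cmodule" where
  "interval_module S =
     (\<lambda>x. if x \<in> fst S then UNIV else {\<lambda>_. 0},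
      \<lambda>f v. if f \<in> snd S then v else (\<lambda>_. 0))"

definition pullback_module :: "('o \<Rightarrow> 'p) \<Rightarrow> ('m \<Rightarrow> 'n) \<Rightarrow> ('p, 'n, 'i, 'k) cmodule \<Rightarrow> ('o, 'm, 'i, 'k) cmodule" where
  "pullback_module Fo Fm M = (\<lambda>x. fst M (Fo x), \<lambda>f. snd M (Fm f))"

definition direct_sum_module ::
  "'s set \<Rightarrow> ('s \<Rightarrow> ('o, 'm, 'i, 'k::field) cmodule) \<Rightarrow> ('o, 'm, 's \<times> 'i, 'k) cmodule" where
  "direct_sum_module S M =
     (\<lambda>x. {v. finite {s. \<exists>i. v (s, i) \<noteq> 0} \<and>
              (\<forall>s. s \<notin> S \<longrightarrow> (\<forall>i. v (s, i) = 0)) \<and>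
              (\<forall>s\<in>S. (\<lambda>i. v (s, i)) \<in> fst (M s) x)},
      \<lambda>f v. (\<lambda>(s, i). if s \<in> S then snd (M s) f (\<lambda>i'. v (s, i')) i else 0))"

end

theory Submission
  imports Defs
begin

lemma zz_sym: "(x,y) \<in> zigzag C M \<Longrightarrow> (y,x) \<in> zigzag C M"
  unfolding zigzag_def
  by (meson sym_Un_converse sym_rtrancl symD)

lemma zz_trans: "(x,y) \<in> zigzag C M \<Longrightarrow> (y,z) \<in> zigzag C M \<Longrightarrow> (x,z) \<in> zigzag C M"
  unfolding zigzag_def by (rule rtrancl_trans)

lemma zz_refl: "(x,x) \<in> zigzag C M"
  unfolding zigzag_def by simp

lemma zz_edge1: "f \<in> M \<Longrightarrow> (Dom C f, Cod C f) \<in> zigzag C M"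
  unfolding zigzag_def by blast

lemma zz_edge2: "f \<in> M \<Longrightarrow> (Cod C f, Dom C f) \<in> zigzag C M"
  unfolding zigzag_def by blast

lemma zz_in_obj:
  assumes S: "is_subcat C S" and xy: "(x,y) \<in> zigzag C (snd S)" and x: "x \<in> fst S"
  shows "y \<in> fst S"
  using xy[unfolded zigzag_def] x
proof (induction rule: rtrancl_induct)
  case base then show ?case by simp
next
  case (step y z)
  then show ?case using S unfolding is_subcat_def by auto
qed

lemma comp_mem: "x \<in> fst S \<Longrightarrow> x \<in> fst (component_of C S x)"
  unfolding component_of_def by (simp add: zz_refl)

lemma comp_same:
  assumes "y \<in> fst (component_of C S x)"
  shows "component_of C S y = component_of C S x"
proof -
  have xy: "(x,y) \<in> zigzag C (snd S)" using assms unfolding component_of_def by auto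
  have "\<And>z. (y,z) \<in> zigzag C (snd S) \<longleftrightarrow> (x,z) \<in> zigzag C (snd S)"
    using xy zz_sym zz_trans by metis
  then show ?thesis unfolding component_of_def by simp
qed

lemma comp_subcat:
  assumes Cc: "is_category C" and S: "is_subcat C S" and x: "x \<in> fst S"
  shows "is_subcat C (component_of C S x)"
proof -
  let ?K = "{y \<in> fst S. (x, y) \<in> zigzag C (snd S)}"
  have cod: "Cod C f \<in> ?K" if "f \<in> snd S" "Dom C f \<in> ?K" for f
    using that S zz_trans[OF _ zz_edge1[of f "snd S" C]] unfolding is_subcat_def by auto
  have idm: "Dom C (Id C y) = y" if "y \<in> fst S" for y
    using that S Cc unfolding is_subcat_def is_category_def by blast
  have comp: "Dom C (Comp C g f) = Dom C f" if "f \<in> snd S" "g \<in> snd S" "Cod C f = Dom C g" for f g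
    using that S Cc unfolding is_subcat_def is_category_def by (meson subsetD)
  have S1: "fst S \<subseteq> Obj C" "snd S \<subseteq> Mor C" and S4: "\<forall>y\<in>fst S. Id C y \<in> snd S"
    and S5: "\<forall>f\<in>snd S. \<forall>g\<in>snd S. Cod C f = Dom C g \<longrightarrow> Comp C g f \<in> snd S"
    using S unfolding is_subcat_def by blast+
  have a: "?K \<subseteq> Obj C" using S1 by blast
  have b: "{f \<in> snd S. Dom C f \<in> ?K} \<subseteq> Mor C" using S1 by blast
  have c: "\<forall>f\<in>{f \<in> snd S. Dom C f \<in> ?K}. Dom C f \<in> ?K \<and> Cod C f \<in> ?K" using cod by blast
  have d: "\<forall>y\<in>?K. Id C y \<in> {f \<in> snd S. Dom C f \<in> ?K}"
  proof
    fix y assume "y \<in> ?K"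
    then show "Id C y \<in> {f \<in> snd S. Dom C f \<in> ?K}" using S4 idm[of y] by simp
  qed
  have e: "\<forall>f\<in>{f \<in> snd S. Dom C f \<in> ?K}. \<forall>g\<in>{f \<in> snd S. Dom C f \<in> ?K}. Cod C f = Dom C g \<longrightarrow>
      Comp C g f \<in> {f \<in> snd S. Dom C f \<in> ?K}"
  proof (intro ballI impI)
    fix f g assume f: "f \<in> {f \<in> snd S. Dom C f \<in> ?K}" and g: "g \<in> {f \<in> snd S. Dom C f \<in> ?K}"
      and fg: "Cod C f = Dom C g"
    then show "Comp C g f \<in> {f \<in> snd S. Dom C f \<in> ?K}" using S5 comp[of f g] by simp
  qed
  show ?thesis
    unfolding is_subcat_def component_of_def fst_conv snd_conv
    using a b c d e by blast
qed

lemma comp_conn: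
  assumes S: "is_subcat C S" and x: "x \<in> fst S"
  shows "connected_subcat C (component_of C S x)"
proof -
  let ?K = "{y \<in> fst S. (x, y) \<in> zigzag C (snd S)}"
  let ?P = "{f \<in> snd S. Dom C f \<in> ?K}"
  have main: "(x,y) \<in> zigzag C ?P" if "(x,y) \<in> zigzag C (snd S)" for y
    using that[unfolded zigzag_def]
  proof (induction rule: rtrancl_induct)
    case base then show ?case by (simp add: zz_refl)
  next
    case (step y z)
    have xyS: "(x,y) \<in> zigzag C (snd S)" using step(1) unfolding zigzag_def .
    have xzS: "(x,z) \<in> zigzag C (snd S)" using rtrancl_into_rtrancl[OF step(1,2)] unfolding zigzag_def .
    have yS: "y \<in> fst S" by (rule zz_in_obj[OF S xyS x])
    have zS: "z \<in> fst S" by (rule zz_in_obj[OF S xzS x])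
    from step(2) have "(y,z) \<in> {(Dom C f, Cod C f) |f. f \<in> snd S} \<or> (z,y) \<in> {(Dom C f, Cod C f) |f. f \<in> snd S}"
      by (simp only: Un_iff converse_iff)
    then obtain f where f: "f \<in> snd S" "(y,z) = (Dom C f, Cod C f) \<or> (z,y) = (Dom C f, Cod C f)"
      by (elim disjE CollectE exE conjE) blast+
    have "(y,z) \<in> zigzag C ?P" using f(2)
    proof
      assume e: "(y,z) = (Dom C f, Cod C f)"
      then have "f \<in> ?P" using f(1) yS xyS by simp
      then show ?thesis using e zz_edge1[of f ?P C] by simp
    next
      assume e: "(z,y) = (Dom C f, Cod C f)"
      then have "f \<in> ?P" using f(1) zS xzS by simp
      then show ?thesis using e zz_edge2[of f ?P C] by simp
    qed
    then show ?case by (rule zz_trans[OF step(3)])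
  qed
  have "(y,z) \<in> zigzag C ?P" if "y \<in> ?K" "z \<in> ?K" for y z
  proof -
    have "(x,y) \<in> zigzag C ?P" "(x,z) \<in> zigzag C ?P" using that main by auto
    then show ?thesis by (rule zz_trans[OF zz_sym])
  qed
  moreover have "x \<in> ?K" using x zz_refl by auto
  ultimately show ?thesis
    unfolding connected_subcat_def component_of_def fst_conv snd_conv by blast
qed


lemma pre_subcat:
  assumes F: "is_functor C D Fo Fm" and Q: "is_subcat D Q"
  shows "is_subcat C (preimage_subcat C Fo Fm Q)"
proof -
  have C: "is_category C" and D: "is_category D" using F unfolding is_functor_def by blast+
  have Fid: "\<forall>x\<in>Obj C. Fm (Id C x) = Id D (Fo x)"
    and Fcomp: "\<forall>f\<in>Mor C. \<forall>g\<in>Mor C. Cod C f = Dom C g \<longrightarrow> Fm (Comp C g f) = Comp D (Fm g) (Fm f)"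
    using F unfolding is_functor_def by blast+
  have Q4: "\<forall>y\<in>fst Q. Id D y \<in> snd Q"
    and Q5: "\<forall>f\<in>snd Q. \<forall>g\<in>snd Q. Cod D f = Dom D g \<longrightarrow> Comp D g f \<in> snd Q"
    using Q unfolding is_subcat_def by blast+
  have C1: "\<forall>f\<in>Mor C. Dom C f \<in> Obj C \<and> Cod C f \<in> Obj C"
    and C2: "\<forall>x\<in>Obj C. Id C x \<in> Mor C \<and> Dom C (Id C x) = x \<and> Cod C (Id C x) = x"
    and C3: "\<forall>f\<in>Mor C. \<forall>g\<in>Mor C. Cod C f = Dom C g \<longrightarrow>
        Comp C g f \<in> Mor C \<and> Dom C (Comp C g f) = Dom C f \<and> Cod C (Comp C g f) = Cod C g"
    using C unfolding is_category_def by blast+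
  have Fmor: "\<forall>f\<in>Mor C. Fm f \<in> Mor D \<and> Dom D (Fm f) = Fo (Dom C f) \<and> Cod D (Fm f) = Fo (Cod C f)"
    using F unfolding is_functor_def by blast
  show ?thesis
    unfolding is_subcat_def preimage_subcat_def fst_conv snd_conv
  proof (intro conjI ballI impI)
    show "{x \<in> Obj C. Fo x \<in> fst Q} \<subseteq> Obj C" by blast
    show "{f \<in> Mor C. Fo (Dom C f) \<in> fst Q \<and> Fo (Cod C f) \<in> fst Q \<and> Fm f \<in> snd Q} \<subseteq> Mor C" by blast
  next
    fix f assume "f \<in> {f \<in> Mor C. Fo (Dom C f) \<in> fst Q \<and> Fo (Cod C f) \<in> fst Q \<and> Fm f \<in> snd Q}"
    then show "Dom C f \<in> {x \<in> Obj C. Fo x \<in> fst Q}" "Cod C f \<in> {x \<in> Obj C. Fo x \<in> fst Q}"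
      using C1 by auto
  next
    fix x assume x: "x \<in> {x \<in> Obj C. Fo x \<in> fst Q}"
    then show "Id C x \<in> {f \<in> Mor C. Fo (Dom C f) \<in> fst Q \<and> Fo (Cod C f) \<in> fst Q \<and> Fm f \<in> snd Q}"
      using C2 Fid Q4 by auto
  next
    fix f g assume f: "f \<in> {f \<in> Mor C. Fo (Dom C f) \<in> fst Q \<and> Fo (Cod C f) \<in> fst Q \<and> Fm f \<in> snd Q}"
      and g: "g \<in> {f \<in> Mor C. Fo (Dom C f) \<in> fst Q \<and> Fo (Cod C f) \<in> fst Q \<and> Fm f \<in> snd Q}"
      and fg: "Cod C f = Dom C g"
    have "Comp D (Fm g) (Fm f) \<in> snd Q" using Q5 f g fg Fmor by auto
    then show "Comp C g f \<in> {f \<in> Mor C. Fo (Dom C f) \<in> fst Q \<and> Fo (Cod C f) \<in> fst Q \<and> Fm f \<in> snd Q}"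
      using f g fg C3 Fcomp by auto
  qed
qed

lemma comp_convex:
  assumes F: "is_functor C D Fo Fm" and Q: "is_interval D Q"
    and y: "y \<in> fst (preimage_subcat C Fo Fm Q)"
  shows "convex C (component_of C (preimage_subcat C Fo Fm Q) y)"
proof -
  let ?S = "preimage_subcat C Fo Fm Q"
  have C: "is_category C" using F unfolding is_functor_def by blast
  have Fcomp: "\<forall>f\<in>Mor C. \<forall>g\<in>Mor C. Cod C f = Dom C g \<longrightarrow> Fm (Comp C g f) = Comp D (Fm g) (Fm f)"
    using F unfolding is_functor_def by blast+
  have Fmor: "\<forall>f\<in>Mor C. Fm f \<in> Mor D \<and> Dom D (Fm f) = Fo (Dom C f) \<and> Cod D (Fm f) = Fo (Cod C f)"
    using F unfolding is_functor_def by blast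
  have C1: "\<forall>f\<in>Mor C. Dom C f \<in> Obj C \<and> Cod C f \<in> Obj C"
    using C unfolding is_category_def by blast
  have Qc: "convex D Q" using Q unfolding is_interval_def by blast
  show ?thesis unfolding convex_def
  proof (intro ballI impI)
    fix \<alpha> \<beta> assume a: "\<alpha> \<in> Mor C" and b: "\<beta> \<in> Mor C"
      and da: "Dom C \<alpha> \<in> fst (component_of C ?S y)"
      and cb: "Cod C \<beta> \<in> fst (component_of C ?S y)"
      and ab: "Cod C \<alpha> = Dom C \<beta>"
      and ba: "Comp C \<beta> \<alpha> \<in> snd (component_of C ?S y)"
    have da': "Dom C \<alpha> \<in> fst ?S" "(y, Dom C \<alpha>) \<in> zigzag C (snd ?S)"
      using da unfolding component_of_def by auto
    have cb': "Cod C \<beta> \<in> fst ?S" using cb unfolding component_of_def by auto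
    have ba': "Comp C \<beta> \<alpha> \<in> snd ?S" using ba unfolding component_of_def by auto
    have FQ: "Comp D (Fm \<beta>) (Fm \<alpha>) \<in> snd Q" using ba' Fcomp a b ab unfolding preimage_subcat_def by auto
    have fa: "Fo (Dom C \<alpha>) \<in> fst Q" using da' unfolding preimage_subcat_def by auto
    have fb: "Fo (Cod C \<beta>) \<in> fst Q" using cb' unfolding preimage_subcat_def by auto
    have m: "Fm \<alpha> \<in> Mor D" "Fm \<beta> \<in> Mor D" "Dom D (Fm \<alpha>) \<in> fst Q" "Cod D (Fm \<beta>) \<in> fst Q"
       "Cod D (Fm \<alpha>) = Dom D (Fm \<beta>)" using Fmor a b fa fb ab by auto
    have conv: "Cod D (Fm \<alpha>) \<in> fst Q \<and> Fm \<alpha> \<in> snd Q \<and> Fm \<beta> \<in> snd Q"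
      using Qc[unfolded convex_def, rule_format, OF m FQ] .
    have aS: "\<alpha> \<in> snd ?S" using conv a Fmor fa unfolding preimage_subcat_def by auto
    have bS: "\<beta> \<in> snd ?S" using conv b Fmor fb ab a unfolding preimage_subcat_def by auto
    have caS: "Cod C \<alpha> \<in> fst ?S" using conv a Fmor C1 unfolding preimage_subcat_def by auto
    have "(y, Cod C \<alpha>) \<in> zigzag C (snd ?S)" using zz_trans[OF da'(2) zz_edge1[OF aS]] .
    then have caP: "Cod C \<alpha> \<in> fst (component_of C ?S y)" using caS unfolding component_of_def by simp
    show "Cod C \<alpha> \<in> fst (component_of C ?S y) \<and> \<alpha> \<in> snd (component_of C ?S y) \<and> \<beta> \<in> snd (component_of C ?S y)"
      using caP aS bS da ab unfolding component_of_def by auto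
  qed
qed


lemma comps_facts:
  assumes "P \<in> components C S"
  shows "fst P \<subseteq> fst S" "snd P \<subseteq> snd S" "\<exists>y\<in>fst S. P = component_of C S y"
  using assms unfolding components_def component_of_def by auto

lemma comp_in_comps: "x \<in> fst S \<Longrightarrow> component_of C S x \<in> components C S"
  unfolding components_def by blast

lemma comps_unique:
  assumes "P \<in> components C S" "x \<in> fst P"
  shows "P = component_of C S x"
proof -
  obtain y where y: "P = component_of C S y" using assms(1) unfolding components_def by blast
  show ?thesis using comp_same[of x C S y] assms(2) y by simp
qed

lemma N_char:
  fixes v :: "('o set \<times> 'm set) \<times> unit \<Rightarrow> 'k::field"
  shows "v \<in> fst (direct_sum_module (components C S) (\<lambda>P. interval_module P :: ('o, 'm, unit, 'k) cmodule)) x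
    \<longleftrightarrow> (\<forall>s i. v (s,i) \<noteq> 0 \<longrightarrow> x \<in> fst S \<and> s = component_of C S x)"
proof
  assume v: "v \<in> fst (direct_sum_module (components C S) (\<lambda>P. interval_module P :: ('o, 'm, unit, 'k) cmodule)) x"
  show "\<forall>s i. v (s,i) \<noteq> 0 \<longrightarrow> x \<in> fst S \<and> s = component_of C S x"
  proof (intro allI impI)
    fix s i assume nz: "v (s,i) \<noteq> 0"
    have "\<forall>s. s \<notin> components C S \<longrightarrow> (\<forall>i. v (s, i) = 0)"
      using v unfolding direct_sum_module_def fst_conv mem_Collect_eq by blast
    then have sc: "s \<in> components C S" using nz by blast
    have "(\<lambda>i. v (s, i)) \<in> (if x \<in> fst s then UNIV else {\<lambda>_. 0})"
      using v sc unfolding direct_sum_module_def interval_module_def by auto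
    then have xs: "x \<in> fst s" using nz by (auto split: if_splits dest: fun_cong[where x=i])
    then show "x \<in> fst S \<and> s = component_of C S x" using comps_facts[OF sc] comps_unique[OF sc xs] by auto
  qed
next
  assume h: "\<forall>s i. v (s,i) \<noteq> 0 \<longrightarrow> x \<in> fst S \<and> s = component_of C S x"
  have fin: "finite {s. \<exists>i. v (s, i) \<noteq> 0}"
    by (rule finite_subset[of _ "{component_of C S x}"]) (use h in auto)
  have out: "\<forall>s. s \<notin> components C S \<longrightarrow> (\<forall>i. v (s, i) = 0)"
    using h comp_in_comps by metis
  have inn: "\<forall>s\<in>components C S. (\<lambda>i. v (s, i)) \<in> fst (interval_module s :: ('o, 'm, unit, 'k) cmodule) x"
  proof
    fix s assume sc: "s \<in> components C S"
    show "(\<lambda>i. v (s, i)) \<in> fst (interval_module s :: ('o, 'm, unit, 'k) cmodule) x"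
    proof (cases "x \<in> fst s")
      case True then show ?thesis unfolding interval_module_def by simp
    next
      case False
      have "v (s, i) = 0" for i
      proof (rule ccontr)
        assume "v (s,i) \<noteq> 0"
        then have "x \<in> fst S \<and> s = component_of C S x" using h by blast
        then have "x \<in> fst S" "s = component_of C S x" by auto
        then show False using False comp_mem by metis
      qed
      then show ?thesis unfolding interval_module_def using False by auto
    qed
  qed
  show "v \<in> fst (direct_sum_module (components C S) (\<lambda>P. interval_module P :: ('o, 'm, unit, 'k) cmodule)) x"
    unfolding direct_sum_module_def fst_conv using fin out inn by blast
qed


theorem lemma2p9:
  fixes C :: "('o, 'm) category" and D :: "('p, 'n) category"
    and Fo :: "'o \<Rightarrow> 'p" and Fm :: "'m \<Rightarrow> 'n"
    and Q :: "'p set \<times> 'n set"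
  assumes "direct C" and "direct D"
    and "is_functor C D Fo Fm"
    and "is_interval D Q"
  shows "is_subcat C (preimage_subcat C Fo Fm Q) \<and>
         (\<forall>P\<in>components C (preimage_subcat C Fo Fm Q). is_interval C P) \<and>
         cmod_iso C
           (pullback_module Fo Fm (interval_module Q :: ('p, 'n, unit, 'k::field) cmodule))
           (direct_sum_module (components C (preimage_subcat C Fo Fm Q))
              (\<lambda>P. interval_module P :: ('o, 'm, unit, 'k) cmodule))"
proof -
  define S where "S = preimage_subcat C Fo Fm Q"
  have F: "is_functor C D Fo Fm" using assms by blast
  have Qi: "is_interval D Q" using assms by blast
  have Qs: "is_subcat D Q" using Qi unfolding is_interval_def by blast
  have C: "is_category C" using F unfolding is_functor_def by blast
  have SS: "is_subcat C S" unfolding S_def by (rule pre_subcat[OF F Qs])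
  have ints: "\<forall>P\<in>components C S. is_interval C P"
  proof
    fix P assume P: "P \<in> components C S"
    then obtain y where y: "y \<in> fst S" "P = component_of C S y" using comps_facts by blast
    show "is_interval C P" unfolding is_interval_def y(2)
      using comp_subcat[OF C SS y(1)] comp_conn[OF SS y(1)] comp_convex[OF F Qi y(1)[unfolded S_def]]
      unfolding S_def by blast
  qed
  let ?M = "pullback_module Fo Fm (interval_module Q :: ('p, 'n, unit, 'k::field) cmodule)"
  let ?N = "direct_sum_module (components C S) (\<lambda>P. interval_module P :: ('o, 'm, unit, 'k) cmodule)"
  define \<phi> :: "'o \<Rightarrow> (unit \<Rightarrow> 'k) \<Rightarrow> ('o set \<times> 'm set) \<times> unit \<Rightarrow> 'k" where
    "\<phi> = (\<lambda>x u (s, i). if x \<in> fst S \<and> s = component_of C S x then u () else 0)"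
  have Sobj: "x \<in> fst S \<longleftrightarrow> Fo x \<in> fst Q" if "x \<in> Obj C" for x
    using that unfolding S_def preimage_subcat_def by simp
  have Mx: "fst ?M x = (if Fo x \<in> fst Q then UNIV else {\<lambda>_. 0})" for x
    unfolding pullback_module_def interval_module_def by simp
  have Mf: "snd ?M f v = (if Fm f \<in> snd Q then v else (\<lambda>_. 0))" for f v
    unfolding pullback_module_def interval_module_def by simp
  have Nf: "snd ?N f v = (\<lambda>(s, i). if s \<in> components C S then (if f \<in> snd s then v (s, i) else 0) else 0)" for f v
    unfolding direct_sum_module_def interval_module_def snd_conv by (intro ext) (auto split: prod.splits)
  have bij: "bij_betw (\<phi> x) (fst ?M x) (fst ?N x)" if x: "x \<in> Obj C" for x
  proof (cases "x \<in> fst S")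
    case True
    have Mx': "fst ?M x = UNIV" using Mx Sobj[OF x] True by simp
    have inj: "inj_on (\<phi> x) UNIV"
    proof (rule inj_onI)
      fix u w assume "\<phi> x u = \<phi> x w"
      then have "\<phi> x u (component_of C S x, ()) = \<phi> x w (component_of C S x, ())" by simp
      then have "u () = w ()" using True unfolding \<phi>_def by simp
      then show "u = w" by (intro ext) (metis (full_types) old.unit.exhaust)
    qed
    have img: "\<phi> x ` UNIV = fst ?N x"
    proof
      show "\<phi> x ` UNIV \<subseteq> fst ?N x"
      proof
        fix v assume "v \<in> \<phi> x ` UNIV"
        then obtain u where u: "v = \<phi> x u" by blast
        show "v \<in> fst ?N x" unfolding N_char u \<phi>_def by auto
      qed
    next
      show "fst ?N x \<subseteq> \<phi> x ` UNIV"
      proof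
        fix v assume v: "v \<in> fst ?N x"
        have h: "\<forall>s i. v (s,i) \<noteq> 0 \<longrightarrow> x \<in> fst S \<and> s = component_of C S x"
          using v unfolding N_char .
        have "v = \<phi> x (\<lambda>_. v (component_of C S x, ()))"
        proof
          fix p show "v p = \<phi> x (\<lambda>_. v (component_of C S x, ())) p"
          proof (cases p)
            case (Pair s i)
            show ?thesis
            proof (cases "s = component_of C S x")
              case True2: True
              then show ?thesis using True unfolding Pair \<phi>_def by (cases i) simp
            next
              case False2: False
              then have "v (s, i) = 0" using h by blast
              then show ?thesis using False2 unfolding Pair \<phi>_def by simp
            qed
          qed
        qed
        then show "v \<in> \<phi> x ` UNIV" by blast
      qed
    qed
    show ?thesis unfolding bij_betw_def Mx' using inj img by blast
  next
    case False
    have Mx': "fst ?M x = {\<lambda>_. 0}" using Mx Sobj[OF x] False by simp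
    have Nx: "fst ?N x = {\<lambda>_. 0}"
    proof
      show "fst ?N x \<subseteq> {\<lambda>_. 0}"
      proof
        fix v assume v: "v \<in> fst ?N x"
        have h: "\<forall>s i. v (s,i) \<noteq> 0 \<longrightarrow> x \<in> fst S \<and> s = component_of C S x"
          using v unfolding N_char .
        have "v = (\<lambda>_. 0)"
        proof
          fix p show "v p = 0" using h False by (cases p) blast
        qed
        then show "v \<in> {\<lambda>_. 0}" by simp
      qed
    next
      show "{\<lambda>_. 0} \<subseteq> fst ?N x" using N_char[of "\<lambda>_. 0" C S x] by simp
    qed
    have "\<phi> x (\<lambda>_. 0) = (\<lambda>_. 0)" unfolding \<phi>_def by (intro ext) (auto split: prod.splits)
    then show ?thesis unfolding bij_betw_def Mx' Nx by (simp add: inj_on_def)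
  qed
  have lin: "lin_on (fst ?M x) (\<phi> x)" for x
    unfolding lin_on_def \<phi>_def by (auto intro!: ext split: prod.splits)
  have nat: "\<phi> (Cod C f) (snd ?M f v) = snd ?N f (\<phi> (Dom C f) v)" if f: "f \<in> Mor C" for f v
  proof (cases "Fm f \<in> snd Q")
    case True
    have Fmor: "Fm f \<in> Mor D \<and> Dom D (Fm f) = Fo (Dom C f) \<and> Cod D (Fm f) = Fo (Cod C f)"
      using F f unfolding is_functor_def by blast
    have "Dom D (Fm f) \<in> fst Q \<and> Cod D (Fm f) \<in> fst Q" using Qs True unfolding is_subcat_def by blast
    then have fS: "f \<in> snd S" using f Fmor True unfolding S_def preimage_subcat_def by auto
    have dS: "Dom C f \<in> fst S" and cS: "Cod C f \<in> fst S" using SS fS unfolding is_subcat_def by blast+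
    have "(Dom C f, Cod C f) \<in> zigzag C (snd S)" by (rule zz_edge1[OF fS])
    then have "Cod C f \<in> fst (component_of C S (Dom C f))" using cS unfolding component_of_def by simp
    then have same: "component_of C S (Cod C f) = component_of C S (Dom C f)" by (rule comp_same)
    have fP: "f \<in> snd (component_of C S (Dom C f))"
      using fS dS comp_mem[OF dS] unfolding component_of_def by auto
    have inc: "component_of C S (Dom C f) \<in> components C S" by (rule comp_in_comps[OF dS])
    show ?thesis
    proof (rule ext)
      fix p :: "('o set \<times> 'm set) \<times> unit"
      obtain s i where p: "p = (s,i)" by (cases p)
      show "\<phi> (Cod C f) (snd ?M f v) p = snd ?N f (\<phi> (Dom C f) v) p"
        unfolding Mf Nf p \<phi>_def using True same fP inc dS cS
        by (cases "s = component_of C S (Dom C f)") simp_all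
    qed
  next
    case False
    have "f \<notin> snd s" if "s \<in> components C S" for s
      using comps_facts(2)[OF that] False unfolding S_def preimage_subcat_def by auto
    then show ?thesis
    proof (intro ext)
      fix p :: "('o set \<times> 'm set) \<times> unit"
      assume nf: "\<And>s. s \<in> components C S \<Longrightarrow> f \<notin> snd s"
      obtain s i where p: "p = (s,i)" by (cases p)
      show "\<phi> (Cod C f) (snd ?M f v) p = snd ?N f (\<phi> (Dom C f) v) p"
        unfolding Mf Nf p \<phi>_def using False nf[of s] by simp
    qed
  qed
  have iso: "cmod_iso C ?M ?N"
    unfolding cmod_iso_def using bij lin nat by blast
  show ?thesis using SS ints iso unfolding S_def by blast
qed

end
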